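(* Let $S$ be a tree and let $v$ be a vertex of $S$ of degree two, with neighbours $u,w$. Let $T$ be the tree obtained from $S$ by deleting $v$ and adding a new edge joining $u$ and $w$. If $T$ is upright, then $S$ is upright.
   Context: For a graph $G$ and $X\subseteq V(G)$, $D_G(X)$ is the set of edges with one end in $X$ and the other in $V(G)\setminus X$; for $A,B\subseteq V(G)$, $D_G(A,B)$ is the set of edges with one end in $A\setminus B$ and the other in $B\setminus A$. A bias in a graph $S$ is a set $\mathcal B$ of subsets of $V(S)$ such that: every $A\in\mathcal B$ satisfies $A\ne\emptyset, V(S)$; if $A,B\in\mathcal B$ and $D_S(A,B)=\emptyset$ then both $A\cap B$ and $A\cup B$ lie in $\mathcal B\cup\{\emptyset,V(S)\}$; and if $A,B\in\mathcal B$ and $|D_S(A,B)|=1$ then at least one of $A\cap B, A\cup B$ lies in $\mathcal B\cup\{\emptyset,V(S)\}$. A directing of $S$ assigns to each edge one of its ends as head, giving a digraph $S'$; $D^+_{S'}(X)$ is the set of edges with tail in $X$ and head outside $X$, and $D^-_{S'}(X)=D^+_{S'}(V(S)\setminus X)$. A forest $S$ is upright if for every bias $\mathcal B$ in $S$ with $|D_S(X)|\ge 2$ for all $X\in\mathcal B$, there is a directing of $S$, forming a digraph $S'$, such that $D^+_{S'}(X)\ne\emptyset$ and $D^-_{S'}(X)\neq\emptyset$ for all $X\in\mathcal B$. *)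

theory Defs
  imports Main
begin

definition graph :: "'a set \<Rightarrow> 'a set set \<Rightarrow> bool" where
  "graph V E \<longleftrightarrow> finite V \<and> (\<forall>e\<in>E. e \<subseteq> V \<and> card e = 2)"

definition has_cycle :: "'a set \<Rightarrow> 'a set set \<Rightarrow> bool" where
  "has_cycle V E \<longleftrightarrow> (\<exists>xs. length xs \<ge> 3 \<and> distinct xs \<and> set xs \<subseteq> V \<and>
      (\<forall>i < length xs. {xs ! i, xs ! (Suc i mod length xs)} \<in> E))"

definition forest :: "'a set \<Rightarrow> 'a set set \<Rightarrow> bool" where
  "forest V E \<longleftrightarrow> graph V E \<and> \<not> has_cycle V E"

definition connected_graph :: "'a set \<Rightarrow> 'a set set \<Rightarrow> bool" where
  "connected_graph V E \<longleftrightarrow>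
     (\<forall>x\<in>V. \<forall>y\<in>V. (\<lambda>a b. {a, b} \<in> E)\<^sup>*\<^sup>* x y)"

definition tree :: "'a set \<Rightarrow> 'a set set \<Rightarrow> bool" where
  "tree V E \<longleftrightarrow> forest V E \<and> V \<noteq> {} \<and> connected_graph V E"

definition degree :: "'a set set \<Rightarrow> 'a \<Rightarrow> nat" where
  "degree E v = card {e \<in> E. v \<in> e}"

definition cut :: "'a set \<Rightarrow> 'a set set \<Rightarrow> 'a set \<Rightarrow> 'a set set" where
  "cut V E X = {e \<in> E. e \<inter> X \<noteq> {} \<and> e \<inter> (V - X) \<noteq> {}}"

definition cut2 :: "'a set set \<Rightarrow> 'a set \<Rightarrow> 'a set \<Rightarrow> 'a set set" where
  "cut2 E A B = {e \<in> E. e \<inter> (A - B) \<noteq> {} \<and> e \<inter> (B - A) \<noteq> {}}"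

definition bias :: "'a set \<Rightarrow> 'a set set \<Rightarrow> 'a set set \<Rightarrow> bool" where
  "bias V E \<B> \<longleftrightarrow>
     (\<forall>A\<in>\<B>. A \<subseteq> V \<and> A \<noteq> {} \<and> A \<noteq> V) \<and>
     (\<forall>A\<in>\<B>. \<forall>B\<in>\<B>. cut2 E A B = {} \<longrightarrow>
         A \<inter> B \<in> \<B> \<union> {{}, V} \<and> A \<union> B \<in> \<B> \<union> {{}, V}) \<and>
     (\<forall>A\<in>\<B>. \<forall>B\<in>\<B>. card (cut2 E A B) = 1 \<longrightarrow>
         A \<inter> B \<in> \<B> \<union> {{}, V} \<or> A \<union> B \<in> \<B> \<union> {{}, V})"

text \<open>A directing assigns to each edge one of its ends as head.\<close>
definition directing :: "'a set set \<Rightarrow> ('a set \<Rightarrow> 'a) \<Rightarrow> bool" where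
  "directing E h \<longleftrightarrow> (\<forall>e\<in>E. h e \<in> e)"

definition out_edges :: "'a set \<Rightarrow> 'a set set \<Rightarrow> ('a set \<Rightarrow> 'a) \<Rightarrow> 'a set \<Rightarrow> 'a set set" where
  "out_edges V E h X = {e \<in> E. e - {h e} \<subseteq> X \<and> h e \<in> V - X}"

definition in_edges :: "'a set \<Rightarrow> 'a set set \<Rightarrow> ('a set \<Rightarrow> 'a) \<Rightarrow> 'a set \<Rightarrow> 'a set set" where
  "in_edges V E h X = out_edges V E h (V - X)"

definition upright :: "'a set \<Rightarrow> 'a set set \<Rightarrow> bool" where
  "upright V E \<longleftrightarrow> forest V E \<and>
     (\<forall>\<B>. bias V E \<B> \<and> (\<forall>X\<in>\<B>. card (cut V E X) \<ge> 2) \<longrightarrow>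
        (\<exists>h. directing E h \<and>
           (\<forall>X\<in>\<B>. out_edges V E h X \<noteq> {} \<and> in_edges V E h X \<noteq> {})))"

end

theory Submission
  imports Defs
begin
definition okset :: "'a \<Rightarrow> 'a \<Rightarrow> 'a \<Rightarrow> 'a set \<Rightarrow> bool" where
  "okset u v w X \<longleftrightarrow> \<not>(v\<in>X \<and> u\<notin>X \<and> w\<notin>X) \<and> \<not>(v\<notin>X \<and> u\<in>X \<and> w\<in>X)"

lemma cut2_pair: "cut2 {a,b} A B = (if a \<inter> (A-B) \<noteq> {} \<and> a \<inter> (B-A) \<noteq> {} then {a} else {}) \<union> (if b \<inter> (A-B) \<noteq> {} \<and> b \<inter> (B-A) \<noteq> {} then {b} else {})"
  unfolding cut2_def by auto

lemma cut2_single: "cut2 {a} A B = (if a \<inter> (A-B) \<noteq> {} \<and> a \<inter> (B-A) \<noteq> {} then {a} else {})"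
  unfolding cut2_def by auto

lemma card_local:
  assumes "u\<noteq>w" "v\<noteq>u" "v\<noteq>w" "okset u v w A" "okset u v w B"
  shows "(okset u v w (A\<inter>B) \<and> okset u v w (A\<union>B) \<longrightarrow>
      card (cut2 {{v,u},{v,w}} A B) = card (cut2 {{u,w}} (A-{v}) (B-{v})))
    \<and> (\<not> okset u v w (A\<inter>B) \<or> \<not> okset u v w (A\<union>B) \<longrightarrow>
      cut2 {{v,u},{v,w}} A B = {} \<and> cut2 {{u,w}} (A-{v}) (B-{v}) = {{u,w}} \<and> (okset u v w (A\<inter>B) \<or> okset u v w (A\<union>B)))"
  using assms unfolding cut2_pair cut2_single okset_def
  apply (cases "u\<in>A"; cases "u\<in>B"; cases "v\<in>A"; cases "v\<in>B"; cases "w\<in>A"; cases "w\<in>B")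
  by (auto simp: doubleton_eq_iff)
lemma cut2_Un: "cut2 (F \<union> G) A B = cut2 F A B \<union> cut2 G A B"
  by (auto simp: cut2_def)

lemma cut2_remove: "\<forall>e\<in>F. v\<notin>e \<Longrightarrow> cut2 F A B = cut2 F (A-{v}) (B-{v})"
  unfolding cut2_def by blast

lemma cut2_sub: "cut2 F A B \<subseteq> F" unfolding cut2_def by auto

lemma cut_as_cut2: "X \<subseteq> V \<Longrightarrow> cut V E X = cut2 E X (V - X)"
  unfolding cut_def cut2_def by auto

theorem mainTheorem3:
  fixes V :: "'a set" and E :: "'a set set" and u v w :: 'a
  assumes "tree V E"
    and "v \<in> V"
    and "degree E v = 2"
    and "{v, u} \<in> E" and "{v, w} \<in> E" and "u \<noteq> w"
    and "upright (V - {v}) ((E - {{v, u}, {v, w}}) \<union> {{u, w}})"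
  shows "upright V E"
proof -
  note tr = assms(1) and vV = assms(2) and dg = assms(3) and evu = assms(4) and evw = assms(5)
    and uw = assms(6) and upT = assms(7)
  define E0 where "E0 = E - {{v, u}, {v, w}}"
  define V' where "V' = V - {v}"
  define E' where "E' = E0 \<union> {{u,w}}"
  have gr: "graph V E" and nocyc: "\<not> has_cycle V E" using tr unfolding tree_def forest_def by auto
  have finV: "finite V" and Esub: "\<And>e. e \<in> E \<Longrightarrow> e \<subseteq> V \<and> card e = 2" using gr unfolding graph_def by auto
  have finE: "finite E"
    by (rule finite_subset[of E "Pow V"]) (use Esub finV in auto)
  have "card {v,u} = 2" using Esub evu by auto
  hence vu: "v \<noteq> u" by (cases "v = u") auto
  have "card {v,w} = 2" using Esub evw by auto
  hence vw: "v \<noteq> w" by (cases "v = w") auto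
  have uV: "u \<in> V" and wV: "w \<in> V" using Esub evu evw by auto
  have dne: "{v,u} \<noteq> {v,w}" using uw vu vw by (auto simp: doubleton_eq_iff)
  have vedges: "{e \<in> E. v \<in> e} = {{v,u},{v,w}}"
  proof -
    have s: "{{v,u},{v,w}} \<subseteq> {e \<in> E. v \<in> e}" using evu evw by auto
    have c: "card {{v,u},{v,w}} = 2" using dne by auto
    have "finite {e \<in> E. v \<in> e}" using finE by auto
    moreover have "card {e \<in> E. v \<in> e} = 2" using dg unfolding degree_def .
    ultimately show ?thesis using s c card_subset_eq by metis
  qed
  have E0v: "\<forall>e\<in>E0. v \<notin> e" using vedges unfolding E0_def by blast
  have uwE: "{u,w} \<notin> E"
  proof
    assume a: "{u,w} \<in> E"
    have "has_cycle V E"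
      unfolding has_cycle_def
    proof (intro exI[of _ "[v,u,w]"] conjI)
      show "\<forall>i<length [v,u,w]. {[v,u,w] ! i, [v,u,w] ! (Suc i mod length [v,u,w])} \<in> E"
      proof (intro allI impI)
        fix i assume "i < length [v,u,w]"
        hence "i = 0 \<or> i = 1 \<or> i = 2" by auto
        thus "{[v,u,w] ! i, [v,u,w] ! (Suc i mod length [v,u,w])} \<in> E"
          using a evu evw by (auto simp: insert_commute)
      qed
    qed (use vu vw uw vV uV wV in auto)
    thus False using nocyc by simp
  qed
  have Eeq: "E = E0 \<union> {{v,u},{v,w}}" using evu evw unfolding E0_def by auto
  have finE0: "finite E0" using finE unfolding E0_def by auto
  have disj1: "E0 \<inter> {{v,u},{v,w}} = {}" unfolding E0_def by auto
  have disj2: "E0 \<inter> {{u,w}} = {}" using uwE unfolding E0_def by auto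
  have E'eq: "(E - {{v, u}, {v, w}}) \<union> {{u, w}} = E'" unfolding E'_def E0_def ..
  have upT': "upright V' E'" using upT E'eq unfolding V'_def by simp

  have K1: "card (cut2 E A B) = card (cut2 E0 A B) + card (cut2 {{v,u},{v,w}} A B)" for A B
  proof -
    have "cut2 E A B = cut2 E0 A B \<union> cut2 {{v,u},{v,w}} A B" using Eeq cut2_Un by metis
    moreover have "cut2 E0 A B \<inter> cut2 {{v,u},{v,w}} A B = {}" using disj1 cut2_sub by blast
    moreover have "finite (cut2 E0 A B)" using finE0 cut2_sub finite_subset by metis
    moreover have "finite (cut2 {{v,u},{v,w}} A B)" using cut2_sub finite_subset by (metis finite.emptyI finite.insertI)
    ultimately show ?thesis by (simp add: card_Un_disjoint)
  qed
  have K2: "card (cut2 E' (A-{v}) (B-{v})) = card (cut2 E0 A B) + card (cut2 {{u,w}} (A-{v}) (B-{v}))" for A B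
  proof -
    have "cut2 E' (A-{v}) (B-{v}) = cut2 E0 A B \<union> cut2 {{u,w}} (A-{v}) (B-{v})"
      unfolding E'_def cut2_Un using cut2_remove[OF E0v] by metis
    moreover have "cut2 E0 A B \<inter> cut2 {{u,w}} (A-{v}) (B-{v}) = {}" using disj2 cut2_sub by blast
    moreover have "finite (cut2 E0 A B)" using finE0 cut2_sub finite_subset by metis
    moreover have "finite (cut2 {{u,w}} (A-{v}) (B-{v}))" using cut2_sub finite_subset by (metis finite.emptyI finite.insertI)
    ultimately show ?thesis by (simp add: card_Un_disjoint)
  qed
  have fin_pair: "finite (cut2 {{v,u},{v,w}} A B)" for A B
    using cut2_sub finite_subset by (metis finite.emptyI finite.insertI)
  have fin_E0c: "finite (cut2 E0 A B)" for A B using finE0 cut2_sub finite_subset by metis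
  have finEc: "finite (cut2 E A B)" for A B using finE cut2_sub finite_subset by metis
  have finE'c: "finite (cut2 E' A B)" for A B
    using finE0 cut2_sub finite_subset unfolding E'_def by (metis finite_Un finite.emptyI finite.insertI)
  note CL = card_local[OF uw vu vw]
  let ?ok = "okset u v w"
  have okcompl: "?ok X \<Longrightarrow> ?ok (V - X)" for X using vV uV wV unfolding okset_def by auto
  have okV: "?ok V" using vV uV wV unfolding okset_def by auto
  have okE: "?ok {}" unfolding okset_def by auto

  show ?thesis
    unfolding upright_def
  proof (intro conjI allI impI)
    show "forest V E" using tr unfolding tree_def by auto
    fix \<B> assume hB: "bias V E \<B> \<and> (\<forall>X\<in>\<B>. 2 \<le> card (cut V E X))"
    hence bB: "bias V E \<B>" and cB: "\<forall>X\<in>\<B>. 2 \<le> card (cut V E X)" by auto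
    have b1: "\<forall>A\<in>\<B>. A \<subseteq> V \<and> A \<noteq> {} \<and> A \<noteq> V"
      using bB unfolding bias_def by (rule conjunct1)
    have b2': "\<forall>A\<in>\<B>. \<forall>B\<in>\<B>. cut2 E A B = {} \<longrightarrow>
         A \<inter> B \<in> \<B> \<union> {{}, V} \<and> A \<union> B \<in> \<B> \<union> {{}, V}"
      using bB unfolding bias_def by (rule conjunct1[OF conjunct2])
    have b3': "\<forall>A\<in>\<B>. \<forall>B\<in>\<B>. card (cut2 E A B) = 1 \<longrightarrow>
         A \<inter> B \<in> \<B> \<union> {{}, V} \<or> A \<union> B \<in> \<B> \<union> {{}, V}"
      using bB unfolding bias_def by (rule conjunct2[OF conjunct2])
    have b2: "A \<inter> B \<in> \<B> \<union> {{}, V} \<and> A \<union> B \<in> \<B> \<union> {{}, V}"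
      if "A\<in>\<B>" "B\<in>\<B>" "cut2 E A B = {}" for A B using b2' that by blast
    have b3: "A \<inter> B \<in> \<B> \<union> {{}, V} \<or> A \<union> B \<in> \<B> \<union> {{}, V}"
      if "A\<in>\<B>" "B\<in>\<B>" "card (cut2 E A B) = 1" for A B
      using bspec[OF bspec[OF b3' that(1)] that(2)] that(3) by blast
    define B' where "B' = (\<lambda>X. X - {v}) ` {X \<in> \<B>. ?ok X}"
    have transfer: "X - {v} \<in> B' \<union> {{}, V'}" if "?ok X" "X \<in> \<B> \<union> {{}, V}" for X
      using that unfolding B'_def V'_def by auto
    have bias': "bias V' E' B'"
      unfolding bias_def
    proof (intro conjI)
      show "\<forall>A\<in>B'. A \<subseteq> V' \<and> A \<noteq> {} \<and> A \<noteq> V'"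
      proof
        fix A' assume "A' \<in> B'"
        then obtain A where A: "A \<in> \<B>" "?ok A" "A' = A - {v}" unfolding B'_def by auto
        have "A \<subseteq> V" "A \<noteq> {}" "A \<noteq> V" using b1 A by auto
        show "A' \<subseteq> V' \<and> A' \<noteq> {} \<and> A' \<noteq> V'"
        proof (intro conjI)
          show "A' \<subseteq> V'" using \<open>A \<subseteq> V\<close> A unfolding V'_def by auto
          show "A' \<noteq> {}"
          proof
            assume "A' = {}"
            hence "A = {v}" using \<open>A \<noteq> {}\<close> A by auto
            thus False using A(2) vu vw unfolding okset_def by auto
          qed
          show "A' \<noteq> V'"
          proof
            assume "A' = V'"
            hence "A = V - {v}" using \<open>A \<noteq> V\<close> \<open>A \<subseteq> V\<close> A unfolding V'_def by auto
            thus False using A(2) vu vw uV wV unfolding okset_def by auto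
          qed
        qed
      qed
      show "\<forall>A\<in>B'. \<forall>B\<in>B'. cut2 E' A B = {} \<longrightarrow> A \<inter> B \<in> B' \<union> {{}, V'} \<and> A \<union> B \<in> B' \<union> {{}, V'}"
      proof (intro ballI impI)
        fix A' B'' assume "A' \<in> B'" "B'' \<in> B'" and e: "cut2 E' A' B'' = {}"
        then obtain A B where A: "A \<in> \<B>" "?ok A" "A' = A - {v}" and B: "B \<in> \<B>" "?ok B" "B'' = B - {v}"
          unfolding B'_def by auto
        have c0: "card (cut2 E0 A B) + card (cut2 {{u,w}} (A-{v}) (B-{v})) = 0"
          using K2[of A B] e A B by simp
        hence "cut2 {{u,w}} (A-{v}) (B-{v}) \<noteq> {{u,w}}" by auto
        hence oks: "?ok (A \<inter> B)" "?ok (A \<union> B)" using CL[OF A(2) B(2)] by blast+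
        hence "card (cut2 {{v,u},{v,w}} A B) = 0" using CL[OF A(2) B(2)] c0 by simp
        hence "card (cut2 E A B) = 0" using K1[of A B] c0 by simp
        hence "cut2 E A B = {}" using finEc by simp
        hence r: "A \<inter> B \<in> \<B> \<union> {{}, V}" "A \<union> B \<in> \<B> \<union> {{}, V}" using b2[OF A(1) B(1)] by blast+
        have "A' \<inter> B'' = (A \<inter> B) - {v}" "A' \<union> B'' = (A \<union> B) - {v}" using A B by auto
        thus "A' \<inter> B'' \<in> B' \<union> {{}, V'} \<and> A' \<union> B'' \<in> B' \<union> {{}, V'}"
          using transfer[OF oks(1) r(1)] transfer[OF oks(2) r(2)] by simp
      qed
      show "\<forall>A\<in>B'. \<forall>B\<in>B'. card (cut2 E' A B) = 1 \<longrightarrow> A \<inter> B \<in> B' \<union> {{}, V'} \<or> A \<union> B \<in> B' \<union> {{}, V'}"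
      proof (intro ballI impI)
        fix A' B'' assume "A' \<in> B'" "B'' \<in> B'" and e: "card (cut2 E' A' B'') = 1"
        then obtain A B where A: "A \<in> \<B>" "?ok A" "A' = A - {v}" and B: "B \<in> \<B>" "?ok B" "B'' = B - {v}"
          unfolding B'_def by auto
        have c1: "card (cut2 E0 A B) + card (cut2 {{u,w}} (A-{v}) (B-{v})) = 1"
          using K2[of A B] e A B by simp
        have eqs: "A' \<inter> B'' = (A \<inter> B) - {v}" "A' \<union> B'' = (A \<union> B) - {v}" using A B by auto
        show "A' \<inter> B'' \<in> B' \<union> {{}, V'} \<or> A' \<union> B'' \<in> B' \<union> {{}, V'}"
        proof (cases "?ok (A \<inter> B) \<and> ?ok (A \<union> B)")
          case True
          hence "card (cut2 E A B) = 1" using CL[OF A(2) B(2)] c1 K1[of A B] by simp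
          hence "A \<inter> B \<in> \<B> \<union> {{}, V} \<or> A \<union> B \<in> \<B> \<union> {{}, V}" using b3[OF A(1) B(1)] by blast
          thus ?thesis using transfer True eqs by auto
        next
          case False
          hence s: "cut2 {{v,u},{v,w}} A B = {}" "cut2 {{u,w}} (A-{v}) (B-{v}) = {{u,w}}"
            and o: "?ok (A \<inter> B) \<or> ?ok (A \<union> B)" using CL[OF A(2) B(2)] by blast+
          hence "card (cut2 E0 A B) = 0" using c1 by simp
          hence "card (cut2 E A B) = 0" using K1[of A B] s by simp
          hence "cut2 E A B = {}" using finEc by simp
          hence r: "A \<inter> B \<in> \<B> \<union> {{}, V}" "A \<union> B \<in> \<B> \<union> {{}, V}" using b2[OF A(1) B(1)] by blast+
          show ?thesis using o transfer[of "A \<inter> B"] transfer[of "A \<union> B"] r eqs by auto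
        qed
      qed
    qed
    have cut': "\<forall>X\<in>B'. 2 \<le> card (cut V' E' X)"
    proof
      fix X' assume "X' \<in> B'"
      then obtain X where X: "X \<in> \<B>" "?ok X" "X' = X - {v}" unfolding B'_def by auto
      have XV: "X \<subseteq> V" using b1 X by auto
      have "cut V E X = cut2 E X (V - X)" using cut_as_cut2[OF XV] .
      moreover have "cut V' E' X' = cut2 E' (X - {v}) ((V - X) - {v})"
      proof -
        have "X' \<subseteq> V'" using XV X unfolding V'_def by auto
        moreover have "V' - X' = (V - X) - {v}" using X unfolding V'_def by auto
        ultimately show ?thesis using cut_as_cut2[of X' V' E'] X by simp
      qed
      moreover have "?ok (X \<inter> (V - X))" "?ok (X \<union> (V - X))" using okE okV XV
        by (simp_all add: Int_Diff Un_Diff_cancel Un_absorb1)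
      ultimately have "card (cut V' E' X') = card (cut V E X)"
        using CL[OF X(2) okcompl[OF X(2)]] K1[of X "V - X"] K2[of X "V - X"] by simp
      thus "2 \<le> card (cut V' E' X')" using cB X by simp
    qed
    obtain h' where dh': "directing E' h'" and hh': "\<forall>X\<in>B'. out_edges V' E' h' X \<noteq> {} \<and> in_edges V' E' h' X \<noteq> {}"
      using upT' bias' cut' unfolding upright_def by blast
    have h'uw: "h' {u,w} = u \<or> h' {u,w} = w" using dh' unfolding directing_def E'_def by auto
    define h where "h e = (if e = {v,u} then (if h' {u,w} = w then v else u)
                      else if e = {v,w} then (if h' {u,w} = w then w else v) else h' e)" for e
    have hvu: "h {v,u} = (if h' {u,w} = w then v else u)" unfolding h_def by simp
    have hvw: "h {v,w} = (if h' {u,w} = w then w else v)" unfolding h_def using dne by simp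
    have hE0: "e \<in> E0 \<Longrightarrow> h e = h' e" for e unfolding h_def E0_def by auto
    show "\<exists>h. directing E h \<and> (\<forall>X\<in>\<B>. out_edges V E h X \<noteq> {} \<and> in_edges V E h X \<noteq> {})"
    proof (intro exI conjI)
      show dh: "directing E h"
        unfolding directing_def
      proof
        fix e assume "e \<in> E"
        hence "e \<in> E0 \<or> e = {v,u} \<or> e = {v,w}" unfolding E0_def by auto
        thus "h e \<in> e" using hvu hvw hE0 dh' unfolding directing_def E'_def by auto
      qed
      have OUT: "out_edges V E h X \<noteq> {}" if XV: "X \<subseteq> V" and ne: "out_edges V' E' h' (X - {v}) \<noteq> {}" for X
      proof -
        obtain e where e: "e \<in> out_edges V' E' h' (X - {v})" using ne by auto
        hence eE': "e \<in> E'" and t: "e - {h' e} \<subseteq> X - {v}" and hd: "h' e \<in> V' - (X - {v})"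
          unfolding out_edges_def by auto
        show ?thesis
        proof (cases "e \<in> E0")
          case True
          hence "e \<in> out_edges V E h X" using t hd hE0[OF True] unfolding out_edges_def E0_def V'_def by auto
          thus ?thesis by auto
        next
          case False
          hence eu: "e = {u,w}" using eE' unfolding E'_def by auto
          have "{v,u} \<in> out_edges V E h X \<or> {v,w} \<in> out_edges V E h X"
            using h'uw t hd eu hvu hvw evu evw vu vw uw vV unfolding out_edges_def V'_def
            by (cases "v \<in> X") auto
          thus ?thesis by auto
        qed
      qed
      show "\<forall>X\<in>\<B>. out_edges V E h X \<noteq> {} \<and> in_edges V E h X \<noteq> {}"
      proof
        fix X assume XB: "X \<in> \<B>"
        have XV: "X \<subseteq> V" using b1 XB by auto
        show "out_edges V E h X \<noteq> {} \<and> in_edges V E h X \<noteq> {}"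
        proof (cases "?ok X")
          case True
          hence "X - {v} \<in> B'" unfolding B'_def using XB by auto
          hence o: "out_edges V' E' h' (X - {v}) \<noteq> {}" and i: "in_edges V' E' h' (X - {v}) \<noteq> {}"
            using hh' by auto
          have "V' - (X - {v}) = (V - X) - {v}" unfolding V'_def by auto
          hence i': "out_edges V' E' h' ((V - X) - {v}) \<noteq> {}" using i unfolding in_edges_def by simp
          show ?thesis using OUT[OF XV o] OUT[OF _ i'] unfolding in_edges_def by auto
        next
          case False
          have "({v,u} \<in> out_edges V E h X \<or> {v,w} \<in> out_edges V E h X) \<and>
                ({v,u} \<in> out_edges V E h (V - X) \<or> {v,w} \<in> out_edges V E h (V - X))"
            using False h'uw hvu hvw evu evw vu vw uw vV uV wV unfolding out_edges_def okset_def
            by auto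
          thus ?thesis unfolding in_edges_def by auto
        qed
      qed
    qed
  qed
qed
end
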